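(* Let $\mu$ be an ergodic invariant probability measure for $\Phi$ and $f\in B(\mathcal X)$. If there exists a Borel set $\bar{\mathcal X}\subset\mathcal X$ with $\mu(\bar{\mathcal X})>0$ such that $\sup_{t\ge0}\mathbb E^x|f(\Phi_t)|<\infty$ for every $x\in\bar{\mathcal X}$, then $f\in L^1(\mu)$.
   Context: $(\mathcal{X},\rho)$ is a Polish space; $\Phi=\{\Phi_t\}_{t\ge0}$ is a càdlàg Feller Markov process on $\mathcal{X}$ with laws $\mathbb{P}^x$, expectations $\mathbb E^x$, and transition kernels $P_t(x,\cdot)$. $B(\mathcal X)$ is the set of Borel real functions. A probability measure $\mu$ is invariant if $\int P_t(x,\cdot)\mu(dx)=\mu$ for all $t\ge0$, and ergodic if moreover every invariant set has $\mu$-measure $0$ or $1$ (equivalently, $\mu$ is an extreme point of the invariant probability measures). *)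

theory Defs
  imports "HOL-Probability.Probability"
begin

text \<open>A cadlag Feller Markov process on a Polish space 'a, realised on a common
  sample space: M x is the law P^x, X t is the coordinate Phi_t.\<close>

definition bounded_borel :: "('a::topological_space \<Rightarrow> real) \<Rightarrow> bool" where
  "bounded_borel h \<longleftrightarrow> h \<in> borel_measurable borel \<and> bounded (range h)"

definition trans_kernel ::
  "('a \<Rightarrow> 'w measure) \<Rightarrow> (real \<Rightarrow> 'w \<Rightarrow> 'a) \<Rightarrow> real \<Rightarrow> 'a \<Rightarrow> 'a set \<Rightarrow> real" where
  "trans_kernel M X t x A = measure (M x) {\<omega> \<in> space (M x). X t \<omega> \<in> A}"

definition cadlag_feller_markov ::
  "('a::polish_space \<Rightarrow> 'w measure) \<Rightarrow> (real \<Rightarrow> 'w \<Rightarrow> 'a) \<Rightarrow> bool" where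
  "cadlag_feller_markov M X \<longleftrightarrow>
     (\<forall>x y. space (M x) = space (M y) \<and> sets (M x) = sets (M y)) \<and>
     (\<forall>x. prob_space (M x)) \<and>
     (\<forall>x t. t \<ge> 0 \<longrightarrow> X t \<in> M x \<rightarrow>\<^sub>M borel) \<and>
     (\<forall>x. AE \<omega> in M x. X 0 \<omega> = x) \<and>
     \<comment> \<open>cadlag paths\<close>
     (\<forall>x. \<forall>\<omega>\<in>space (M x).
        (\<forall>t\<ge>0. ((\<lambda>s. X s \<omega>) \<longlongrightarrow> X t \<omega>) (at_right t)) \<and>
        (\<forall>t>0. \<exists>l. ((\<lambda>s. X s \<omega>) \<longlongrightarrow> l) (at_left t))) \<and>
     \<comment> \<open>measurability of the transition kernels\<close>
     (\<forall>t h. t \<ge> 0 \<longrightarrow> bounded_borel h \<longrightarrow>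
        (\<lambda>x. \<integral>\<omega>. h (X t \<omega>) \<partial>M x) \<in> borel_measurable borel) \<and>
     \<comment> \<open>Markov property w.r.t. the natural filtration\<close>
     (\<forall>x s t ts gs h. s \<ge> 0 \<longrightarrow> t \<ge> 0 \<longrightarrow> length ts = length gs \<longrightarrow>
        set ts \<subseteq> {0..s} \<longrightarrow> (\<forall>g\<in>set gs. bounded_borel g) \<longrightarrow> bounded_borel h \<longrightarrow>
        (\<integral>\<omega>. (\<Prod>i<length ts. (gs ! i) (X (ts ! i) \<omega>)) * h (X (s + t) \<omega>) \<partial>M x) =
        (\<integral>\<omega>. (\<Prod>i<length ts. (gs ! i) (X (ts ! i) \<omega>)) *
               (\<integral>\<omega>'. h (X t \<omega>') \<partial>M (X s \<omega>)) \<partial>M x)) \<and>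
     \<comment> \<open>Feller property\<close>
     (\<forall>t h. t \<ge> 0 \<longrightarrow> continuous_on UNIV h \<longrightarrow> bounded (range h) \<longrightarrow>
        continuous_on UNIV (\<lambda>x. \<integral>\<omega>. (h :: 'a \<Rightarrow> real) (X t \<omega>) \<partial>M x))"

definition invariant_measure ::
  "('a::polish_space \<Rightarrow> 'w measure) \<Rightarrow> (real \<Rightarrow> 'w \<Rightarrow> 'a) \<Rightarrow> 'a measure \<Rightarrow> bool" where
  "invariant_measure M X \<mu> \<longleftrightarrow> prob_space \<mu> \<and> sets \<mu> = sets borel \<and>
     (\<forall>t\<ge>0. \<forall>A\<in>sets borel. (\<integral>x. trans_kernel M X t x A \<partial>\<mu>) = measure \<mu> A)"

definition invariant_set ::
  "('a::polish_space \<Rightarrow> 'w measure) \<Rightarrow> (real \<Rightarrow> 'w \<Rightarrow> 'a) \<Rightarrow> 'a measure \<Rightarrow> 'a set \<Rightarrow> bool" where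
  "invariant_set M X \<mu> A \<longleftrightarrow> A \<in> sets borel \<and>
     (\<forall>t\<ge>0. AE x in \<mu>. trans_kernel M X t x A = indicator A x)"

definition ergodic_measure ::
  "('a::polish_space \<Rightarrow> 'w measure) \<Rightarrow> (real \<Rightarrow> 'w \<Rightarrow> 'a) \<Rightarrow> 'a measure \<Rightarrow> bool" where
  "ergodic_measure M X \<mu> \<longleftrightarrow> invariant_measure M X \<mu> \<and>
     (\<forall>A. invariant_set M X \<mu> A \<longrightarrow> measure \<mu> A = 0 \<or> measure \<mu> A = 1)"

end

theory Submission
  imports Defs
begin

locale cfm =
  fixes M :: "'a::polish_space \<Rightarrow> 'w measure" and X :: "real \<Rightarrow> 'w \<Rightarrow> 'a"
    and \<mu> :: "'a measure"
  assumes cfm: "cadlag_feller_markov M X" and inv: "invariant_measure M X \<mu>"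
begin

definition P :: "real \<Rightarrow> ('a \<Rightarrow> real) \<Rightarrow> 'a \<Rightarrow> real" where
  "P t g x = (\<integral>\<omega>. g (X t \<omega>) \<partial>M x)"

lemmas cfmD = cfm[unfolded cadlag_feller_markov_def]

lemma prob: "prob_space (M x)"
  using cfmD[THEN conjunct2, THEN conjunct1] by blast

lemma sets_M: "sets (M x) = sets (M y)"
  using cfmD[THEN conjunct1] by blast

lemma space_M: "space (M x) = space (M y)"
  using cfmD[THEN conjunct1] by blast

lemma Xm: "t \<ge> 0 \<Longrightarrow> X t \<in> M x \<rightarrow>\<^sub>M borel"
  using cfmD[THEN conjunct2, THEN conjunct2, THEN conjunct1] by blast

lemma X0: "AE \<omega> in M x. X 0 \<omega> = x"
  using cfmD[THEN conjunct2, THEN conjunct2, THEN conjunct2, THEN conjunct1] by blast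

lemma rc: "\<omega> \<in> space (M x) \<Longrightarrow> ((\<lambda>s. X s \<omega>) \<longlongrightarrow> X 0 \<omega>) (at_right 0)"
  using cfmD[THEN conjunct2, THEN conjunct2, THEN conjunct2, THEN conjunct2, THEN conjunct1] by auto

lemma kern: "t \<ge> 0 \<Longrightarrow> bounded_borel h \<Longrightarrow> P t h \<in> borel_measurable borel"
  using cfmD[THEN conjunct2, THEN conjunct2, THEN conjunct2, THEN conjunct2, THEN conjunct2, THEN conjunct1]
  unfolding P_def by blast

lemma markov: "s \<ge> 0 \<Longrightarrow> t \<ge> 0 \<Longrightarrow> bounded_borel h \<Longrightarrow> P (s + t) h x = P s (P t h) x"
proof -
  assume a: "s \<ge> 0" "t \<ge> 0" "bounded_borel h"
  have "\<forall>x s t ts gs h. s \<ge> 0 \<longrightarrow> t \<ge> 0 \<longrightarrow> length ts = length gs \<longrightarrow>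
        set ts \<subseteq> {0..s} \<longrightarrow> (\<forall>g\<in>set gs. bounded_borel g) \<longrightarrow> bounded_borel h \<longrightarrow>
        (\<integral>\<omega>. (\<Prod>i<length ts. (gs ! i) (X (ts ! i) \<omega>)) * h (X (s + t) \<omega>) \<partial>M x) =
        (\<integral>\<omega>. (\<Prod>i<length ts. (gs ! i) (X (ts ! i) \<omega>)) *
               (\<integral>\<omega>'. h (X t \<omega>') \<partial>M (X s \<omega>)) \<partial>M x)"
    by (rule cfmD[THEN conjunct2, THEN conjunct2, THEN conjunct2, THEN conjunct2, THEN conjunct2, THEN conjunct2, THEN conjunct1])
  from this[rule_format, of s t "[]" "[]" h x] a show ?thesis
    unfolding P_def by simp
qed

lemma mu_prob: "prob_space \<mu>" and sets_mu: "sets \<mu> = sets borel"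
  and mu_inv: "t \<ge> 0 \<Longrightarrow> A \<in> sets borel \<Longrightarrow> (\<integral>x. trans_kernel M X t x A \<partial>\<mu>) = measure \<mu> A"
  using inv unfolding invariant_measure_def by auto

lemma space_mu: "space \<mu> = UNIV"
  using sets_eq_imp_space_eq[OF sets_mu] by simp

lemma meas_mu: "g \<in> borel_measurable borel \<Longrightarrow> g \<in> borel_measurable \<mu>"
  using measurable_cong_sets[OF sets_mu refl] by blast

lemma bb_iff: "bounded_borel g \<longleftrightarrow> g \<in> borel_measurable borel \<and> (\<exists>B. \<forall>x. \<bar>g x\<bar> \<le> B)"
  unfolding bounded_borel_def bounded_iff by auto

lemma meas_comp: "t \<ge> 0 \<Longrightarrow> g \<in> borel_measurable borel \<Longrightarrow> (\<lambda>\<omega>. g (X t \<omega>)) \<in> borel_measurable (M x)"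
  using measurable_compose[OF Xm] by blast

lemma int_comp: "t \<ge> 0 \<Longrightarrow> bounded_borel g \<Longrightarrow> integrable (M x) (\<lambda>\<omega>. g (X t \<omega>))"
proof -
  assume a: "t \<ge> 0" "bounded_borel g"
  then obtain B where B: "\<And>x. \<bar>g x\<bar> \<le> B" and m: "g \<in> borel_measurable borel" by (auto simp: bb_iff)
  interpret prob_space "M x" by (rule prob)
  show ?thesis by (rule integrable_const_bound[where B=B]) (use B meas_comp[OF a(1) m] in auto)
qed

lemma P_bound: "(\<And>y. \<bar>g y\<bar> \<le> B) \<Longrightarrow> \<bar>P t g x\<bar> \<le> B"
proof -
  assume B: "\<And>y. \<bar>g y\<bar> \<le> B"
  interpret prob_space "M x" by (rule prob)
  have "\<bar>P t g x\<bar> \<le> (\<integral>\<omega>. \<bar>g (X t \<omega>)\<bar> \<partial>M x)" unfolding P_def by (rule integral_abs_bound)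
  also have "\<dots> \<le> (\<integral>\<omega>. B \<partial>M x)"
  proof (cases "integrable (M x) (\<lambda>\<omega>. \<bar>g (X t \<omega>)\<bar>)")
    case True thus ?thesis by (intro integral_mono) (use B in auto)
  next
    case False thus ?thesis using B[of undefined] by (simp add: not_integrable_integral_eq)
  qed
  finally show ?thesis by (simp add: prob_space)
qed

lemma P_mono: "t \<ge> 0 \<Longrightarrow> bounded_borel g \<Longrightarrow> bounded_borel g' \<Longrightarrow> (\<And>y. g y \<le> g' y) \<Longrightarrow> P t g x \<le> P t g' x"
  unfolding P_def by (intro integral_mono int_comp) auto

lemma P_const: "P t (\<lambda>_. c) x = c"
proof -
  interpret prob_space "M x" by (rule prob)
  show ?thesis by (simp add: P_def prob_space)
qed

lemma P_lin: "t \<ge> 0 \<Longrightarrow> bounded_borel g \<Longrightarrow> bounded_borel g' \<Longrightarrow>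
   P t (\<lambda>y. a * g y + b * g' y) x = a * P t g x + b * P t g' x"
  unfolding P_def using int_comp[of t g x] int_comp[of t g' x] by simp

lemma bb_const: "bounded_borel (\<lambda>_. c)" by (auto simp: bb_iff)

lemma bb_lin: "bounded_borel g \<Longrightarrow> bounded_borel g' \<Longrightarrow> bounded_borel (\<lambda>y. a * g y + b * g' y)"
proof -
  assume "bounded_borel g" "bounded_borel g'"
  then obtain B B' where "\<And>x. \<bar>g x\<bar> \<le> B" "\<And>x. \<bar>g' x\<bar> \<le> B'" and m: "g \<in> borel_measurable borel" "g' \<in> borel_measurable borel"
    by (auto simp: bb_iff)
  hence "\<And>x. \<bar>a * g x + b * g' x\<bar> \<le> \<bar>a\<bar> * B + \<bar>b\<bar> * B'"
  proof -
    fix x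
    have "\<bar>a * g x + b * g' x\<bar> \<le> \<bar>a\<bar> * \<bar>g x\<bar> + \<bar>b\<bar> * \<bar>g' x\<bar>"
      by (metis abs_mult abs_triangle_ineq)
    also have "\<dots> \<le> \<bar>a\<bar> * B + \<bar>b\<bar> * B'"
      by (intro add_mono mult_left_mono) (auto simp: \<open>\<And>x. \<bar>g x\<bar> \<le> B\<close> \<open>\<And>x. \<bar>g' x\<bar> \<le> B'\<close>)
    finally show "\<bar>a * g x + b * g' x\<bar> \<le> \<bar>a\<bar> * B + \<bar>b\<bar> * B'" .
  qed
  thus ?thesis using m by (auto simp: bb_iff)
qed

lemma bb_mult: "bounded_borel g \<Longrightarrow> bounded_borel g' \<Longrightarrow> bounded_borel (\<lambda>y. g y * g' y)"
proof -
  assume "bounded_borel g" "bounded_borel g'"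
  then obtain B B' where b: "\<And>x. \<bar>g x\<bar> \<le> B" "\<And>x. \<bar>g' x\<bar> \<le> B'" and m: "g \<in> borel_measurable borel" "g' \<in> borel_measurable borel"
    by (auto simp: bb_iff)
  hence "\<And>x. \<bar>g x * g' x\<bar> \<le> B * B'"
    by (simp add: abs_mult mult_mono')
  thus ?thesis using m by (auto simp: bb_iff)
qed

lemma bb_ind: "A \<in> sets borel \<Longrightarrow> bounded_borel (indicator A :: 'a \<Rightarrow> real)"
  by (auto simp: bb_iff intro!: exI[of _ 1])

lemma bb_P: "t \<ge> 0 \<Longrightarrow> bounded_borel g \<Longrightarrow> bounded_borel (P t g)"
proof -
  assume a: "t \<ge> 0" "bounded_borel g"
  then obtain B where "\<And>x. \<bar>g x\<bar> \<le> B" by (auto simp: bb_iff)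
  thus ?thesis using kern[OF a] P_bound[of g B] by (auto simp: bb_iff)
qed


lemma P_ind: "t \<ge> 0 \<Longrightarrow> A \<in> sets borel \<Longrightarrow> P t (indicator A) x = measure (M x) (X t -` A \<inter> space (M x))"
proof -
  assume a: "t \<ge> 0" "A \<in> sets borel"
  have "P t (indicator A) x = (\<integral>\<omega>. indicator (X t -` A \<inter> space (M x)) \<omega> \<partial>M x)"
    unfolding P_def by (intro Bochner_Integration.integral_cong) (auto simp: indicator_def)
  thus ?thesis by simp
qed

lemma tk_P: "t \<ge> 0 \<Longrightarrow> A \<in> sets borel \<Longrightarrow> trans_kernel M X t x A = P t (indicator A) x"
  unfolding trans_kernel_def P_ind by (rule arg_cong[where f="measure (M x)"]) auto

definition K :: "real \<Rightarrow> 'a \<Rightarrow> 'a measure" where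
  "K t x = distr (M x) borel (X t)"

lemma emeasure_K: "t \<ge> 0 \<Longrightarrow> A \<in> sets borel \<Longrightarrow> emeasure (K t x) A = ennreal (P t (indicator A) x)"
proof -
  assume a: "t \<ge> 0" "A \<in> sets borel"
  interpret prob_space "M x" by (rule prob)
  show ?thesis unfolding K_def P_ind[OF a]
    by (simp add: emeasure_distr[OF Xm[OF a(1)] a(2)] emeasure_eq_measure)
qed

lemma K_meas: "t \<ge> 0 \<Longrightarrow> K t \<in> \<mu> \<rightarrow>\<^sub>M subprob_algebra borel"
proof (rule measurable_subprob_algebra)
  fix x assume t: "t \<ge> 0"
  interpret prob_space "M x" by (rule prob)
  have "prob_space (K t x)" unfolding K_def by (rule prob_space_distr[OF Xm[OF t]])
  thus "subprob_space (K t x)" by (rule prob_space_imp_subprob_space)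
  show "sets (K t x) = sets borel" unfolding K_def by simp
next
  fix A :: "'a set" assume t: "t \<ge> 0" and A: "A \<in> sets borel"
  have "(\<lambda>x. ennreal (P t (indicator A) x)) \<in> borel_measurable \<mu>"
    using meas_mu[OF kern[OF t bb_ind[OF A]]] by measurable
  thus "(\<lambda>a. emeasure (K t a) A) \<in> borel_measurable \<mu>"
    by (subst emeasure_K[OF t A])
qed

lemma bind_K: "t \<ge> 0 \<Longrightarrow> bind \<mu> (K t) = \<mu>"
proof (rule measure_eqI)
  assume t: "t \<ge> 0"
  interpret prob_space \<mu> by (rule mu_prob)
  have ne: "space \<mu> \<noteq> {}" by (simp add: space_mu)
  have sK: "\<And>x. sets (K t x) = sets borel" unfolding K_def by simp
  show "sets (bind \<mu> (K t)) = sets \<mu>" using sets_bind[OF sK ne] sets_mu by simp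
  fix A assume "A \<in> sets (bind \<mu> (K t))"
  hence A: "A \<in> sets borel" using sets_bind[OF sK ne] by simp
  have "emeasure (bind \<mu> (K t)) A = (\<integral>\<^sup>+x. emeasure (K t x) A \<partial>\<mu>)"
    by (rule emeasure_bind[OF ne K_meas[OF t] A])
  also have "\<dots> = (\<integral>\<^sup>+x. ennreal (P t (indicator A) x) \<partial>\<mu>)"
    by (intro nn_integral_cong) (simp add: emeasure_K[OF t A])
  also have "\<dots> = ennreal (\<integral>x. P t (indicator A) x \<partial>\<mu>)"
  proof (rule nn_integral_eq_integral)
    show "integrable \<mu> (P t (indicator A))"
      by (rule integrable_const_bound[where B=1])
         (auto intro!: P_bound meas_mu kern[OF t bb_ind[OF A]])
    show "AE x in \<mu>. 0 \<le> P t (indicator A) x"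
      unfolding P_def by (auto intro!: integral_nonneg_AE)
  qed
  also have "(\<integral>x. P t (indicator A) x \<partial>\<mu>) = measure \<mu> A"
    using mu_inv[OF t A] tk_P[OF t A] by simp
  finally show "emeasure (bind \<mu> (K t)) A = emeasure \<mu> A"
    by (simp add: emeasure_eq_measure)
qed

lemma P_inv: "t \<ge> 0 \<Longrightarrow> bounded_borel g \<Longrightarrow> (\<integral>x. P t g x \<partial>\<mu>) = (\<integral>x. g x \<partial>\<mu>)"
proof -
  assume t: "t \<ge> 0" and g: "bounded_borel g"
  then obtain B where B: "\<And>x. \<bar>g x\<bar> \<le> B" and m: "g \<in> borel_measurable borel" by (auto simp: bb_iff)
  have "(\<integral>x. g x \<partial>\<mu>) = (\<integral>x. g x \<partial>bind \<mu> (K t))" using bind_K[OF t] by simp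
  also have "\<dots> = (\<integral>x. (\<integral>y. g y \<partial>K t x) \<partial>\<mu>)"
  proof (rule integral_bind[where B=B and B'=1])
    show "g \<in> borel_measurable borel" by (rule m)
    show "\<And>x. x \<in> space borel \<Longrightarrow> \<bar>g x\<bar> \<le> B" using B by simp
    show "K t \<in> \<mu> \<rightarrow>\<^sub>M subprob_algebra borel" by (rule K_meas[OF t])
    show "finite_measure \<mu>" using mu_prob by (simp add: prob_space_def)
    show "AE x in \<mu>. emeasure (K t x) (space (K t x)) \<le> ennreal 1"
    proof (rule AE_I2)
      fix x
      interpret prob_space "M x" by (rule prob)
      have "prob_space (K t x)" unfolding K_def by (rule prob_space_distr[OF Xm[OF t]])
      thus "emeasure (K t x) (space (K t x)) \<le> ennreal 1" by (simp add: prob_space.emeasure_space_1)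
    qed
  qed
  also have "\<dots> = (\<integral>x. P t g x \<partial>\<mu>)"
    unfolding K_def P_def by (intro Bochner_Integration.integral_cong refl integral_distr[OF Xm[OF t] m])
  finally show ?thesis by simp
qed


lemma dct_bounded:
  fixes s :: "nat \<Rightarrow> 'b \<Rightarrow> real"
  assumes N: "prob_space N" and f: "f \<in> borel_measurable N" and sm: "\<And>i. s i \<in> borel_measurable N"
    and lim: "AE x in N. (\<lambda>i. s i x) \<longlonglongrightarrow> f x"
    and bd: "\<And>i x. x \<in> space N \<Longrightarrow> \<bar>s i x\<bar> \<le> B"
  shows "(\<lambda>i. integral\<^sup>L N (s i)) \<longlonglongrightarrow> integral\<^sup>L N f"
proof (rule integral_dominated_convergence[where w="\<lambda>_. B"])
  interpret prob_space N by (rule N)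
  show "integrable N (\<lambda>_. B)" by simp
qed (use f sm lim bd in auto)

definition Rn :: "nat \<Rightarrow> real set" where "Rn n = {r. r \<in> \<rat> \<and> real n \<le> r}"

lemma Rn_count: "countable (Rn n)"
  unfolding Rn_def by (rule countable_subset[OF _ countable_rat]) auto

lemma Rn_in: "real n \<in> Rn n" unfolding Rn_def by auto

lemma Rn_ne: "Rn n \<noteq> {}" using Rn_in by auto

lemma Rn_nonneg: "r \<in> Rn n \<Longrightarrow> r \<ge> 0" unfolding Rn_def by auto

definition S :: "('a \<Rightarrow> real) \<Rightarrow> nat \<Rightarrow> 'a \<Rightarrow> real" where
  "S h n x = (SUP r\<in>Rn n. P r h x)"

definition V :: "('a \<Rightarrow> real) \<Rightarrow> 'a \<Rightarrow> real" where
  "V h x = (INF n. S h n x)"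

context
  fixes h :: "'a \<Rightarrow> real" and B :: real assumes hm: "h \<in> borel_measurable borel" and hB: "\<And>x. \<bar>h x\<bar> \<le> B"
begin

lemma hbb: "bounded_borel h" using hm hB by (auto simp: bb_iff)

lemma P_boundh: "\<bar>P t h x\<bar> \<le> B" by (rule P_bound) (rule hB)

lemma bdd_S: "bdd_above ((\<lambda>r. P r h x) ` A)"
  using P_boundh by (intro bdd_aboveI[where M=B]) (auto simp: abs_le_iff)

lemma P_le_S: "r \<in> Rn n \<Longrightarrow> P r h x \<le> S h n x"
  unfolding S_def by (rule cSUP_upper[OF _ bdd_S])

lemma S_bound: "\<bar>S h n x\<bar> \<le> B"
proof -
  have "S h n x \<le> B" unfolding S_def
    by (rule cSUP_least[OF Rn_ne]) (use P_boundh in \<open>auto simp: abs_le_iff\<close>)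
  moreover have "-B \<le> S h n x"
    using P_le_S[OF Rn_in[of n]] P_boundh[where t="real n"] by (smt (verit))
  ultimately show ?thesis by auto
qed

lemma S_meas: "S h n \<in> borel_measurable borel"
  unfolding S_def
  by (rule borel_measurable_cSUP[OF Rn_count]) (auto intro: kern[OF Rn_nonneg hbb] bdd_S)

lemma S_bb: "bounded_borel (S h n)" using S_meas S_bound by (auto simp: bb_iff)

lemma S_dec: "decseq (\<lambda>n. S h n x)"
proof (rule decseq_SucI)
  fix n
  have "Rn (Suc n) \<subseteq> Rn n" unfolding Rn_def by auto
  thus "S h (Suc n) x \<le> S h n x" unfolding S_def
    by (intro cSUP_subset_mono[OF Rn_ne bdd_S]) auto
qed

lemma S_ge: "-B \<le> S h n x" using S_bound[of n x] by linarith

lemma bdd_below_S: "bdd_below (range (\<lambda>n. S h n x))"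
  using S_ge by (intro bdd_belowI[where m="-B"]) auto

lemma S_lim: "(\<lambda>n. S h n x) \<longlonglongrightarrow> V h x"
  unfolding V_def by (rule LIMSEQ_decseq_INF[OF bdd_below_S S_dec])

lemma V_le_S: "V h x \<le> S h n x"
  unfolding V_def by (rule cINF_lower[OF bdd_below_S]) simp

lemma V_bound: "\<bar>V h x\<bar> \<le> B"
proof -
  have "V h x \<le> B" using V_le_S[of x 0] S_bound[of 0 x] by auto
  moreover have "-B \<le> V h x" unfolding V_def
    by (rule cINF_greatest) (auto intro: S_ge)
  ultimately show ?thesis by auto
qed

lemma V_meas: "V h \<in> borel_measurable borel"
  unfolding V_def
  by (rule borel_measurable_cINF) (auto intro: S_meas bdd_below_S)

lemma V_bb: "bounded_borel (V h)" using V_meas V_bound by (auto simp: bb_iff)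

lemma V_subharm:
  assumes q: "q \<in> \<rat>" "q \<ge> 0"
  shows "V h x \<le> P q (V h) x"
proof -
  define m where "m = nat \<lceil>q\<rceil>"
  have qm: "q \<le> real m" unfolding m_def by linarith
  have step: "S h (n + m) x \<le> P q (S h n) x" for n
    unfolding S_def[of h "n+m"]
  proof (rule cSUP_least[OF Rn_ne])
    fix r' assume r': "r' \<in> Rn (n + m)"
    define r where "r = r' - q"
    have r: "r \<in> Rn n" using r' q qm unfolding Rn_def r_def by (auto intro: Rats_diff)
    have "P r' h x = P (q + r) h x" unfolding r_def by simp
    also have "\<dots> = P q (P r h) x" by (rule markov[OF q(2) Rn_nonneg[OF r] hbb])
    also have "\<dots> \<le> P q (S h n) x"
      by (rule P_mono[OF q(2) bb_P[OF Rn_nonneg[OF r] hbb] S_bb]) (rule P_le_S[OF r])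
    finally show "P r' h x \<le> P q (S h n) x" .
  qed
  have lim: "(\<lambda>n. P q (S h n) x) \<longlonglongrightarrow> P q (V h) x"
    unfolding P_def
  proof (rule dct_bounded[OF prob])
    show "(\<lambda>\<omega>. V h (X q \<omega>)) \<in> borel_measurable (M x)" by (rule meas_comp[OF q(2) V_meas])
    show "\<And>i. (\<lambda>\<omega>. S h i (X q \<omega>)) \<in> borel_measurable (M x)" by (rule meas_comp[OF q(2) S_meas])
    show "AE \<omega> in M x. (\<lambda>i. S h i (X q \<omega>)) \<longlonglongrightarrow> V h (X q \<omega>)" by (simp add: S_lim)
    show "\<And>i \<omega>. \<bar>S h i (X q \<omega>)\<bar> \<le> B" by (rule S_bound)
  qed
  show ?thesis
    by (rule LIMSEQ_le_const[OF lim]) (use V_le_S step order_trans in blast)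
qed

lemma int_V: "(\<integral>x. h x \<partial>\<mu>) \<le> (\<integral>x. V h x \<partial>\<mu>)"
proof -
  interpret prob_space \<mu> by (rule mu_prob)
  have lim: "(\<lambda>n. \<integral>x. S h n x \<partial>\<mu>) \<longlonglongrightarrow> (\<integral>x. V h x \<partial>\<mu>)"
    by (rule dct_bounded[OF mu_prob meas_mu[OF V_meas] meas_mu[OF S_meas] AE_I2[OF S_lim] S_bound])
  have "(\<integral>x. h x \<partial>\<mu>) \<le> (\<integral>x. S h n x \<partial>\<mu>)" for n
  proof -
    have "(\<integral>x. h x \<partial>\<mu>) = (\<integral>x. P (real n) h x \<partial>\<mu>)" by (rule P_inv[symmetric]) (auto intro: hbb)
    also have "\<dots> \<le> (\<integral>x. S h n x \<partial>\<mu>)"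
    proof (rule integral_mono)
      show "integrable \<mu> (P (real n) h)"
        by (rule integrable_const_bound[where B=B]) (auto intro: P_boundh meas_mu[OF kern[OF _ hbb]])
      show "integrable \<mu> (S h n)"
        by (rule integrable_const_bound[where B=B]) (auto intro: S_bound meas_mu S_meas)
    qed (rule P_le_S[OF Rn_in])
    finally show ?thesis .
  qed
  thus ?thesis by (intro LIMSEQ_le_const[OF lim]) auto
qed

end


lemma int_bb: "bounded_borel g \<Longrightarrow> integrable \<mu> g"
proof -
  assume "bounded_borel g"
  then obtain B where "\<And>x. \<bar>g x\<bar> \<le> B" "g \<in> borel_measurable borel" by (auto simp: bb_iff)
  interpret prob_space \<mu> by (rule mu_prob)
  show ?thesis by (rule integrable_const_bound[where B=B]) (auto intro: meas_mu \<open>\<And>x. \<bar>g x\<bar> \<le> B\<close> \<open>g \<in> borel_measurable borel\<close>)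
qed

lemma harm_ae:
  assumes q: "q \<ge> 0" and u: "bounded_borel u" and sub: "\<And>x. u x \<le> P q u x"
  shows "AE x in \<mu>. P q u x = u x"
proof -
  have i1: "integrable \<mu> (P q u)" by (rule int_bb[OF bb_P[OF q u]])
  have i2: "integrable \<mu> u" by (rule int_bb[OF u])
  have "(\<integral>x. P q u x - u x \<partial>\<mu>) = 0"
    using P_inv[OF q u] i1 i2 by simp
  moreover have "integrable \<mu> (\<lambda>x. P q u x - u x)" using i1 i2 by simp
  ultimately have "AE x in \<mu>. P q u x - u x = 0"
    using integral_nonneg_eq_0_iff_AE[of \<mu> "\<lambda>x. P q u x - u x"] sub by auto
  thus ?thesis by auto
qed

lemma bb_max: "bounded_borel u \<Longrightarrow> bounded_borel (\<lambda>y. max (u y) c)"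
proof -
  assume "bounded_borel u"
  then obtain B where B: "\<And>x. \<bar>u x\<bar> \<le> B" and m: "u \<in> borel_measurable borel" by (auto simp: bb_iff)
  have "\<And>x. \<bar>max (u x) c\<bar> \<le> B + \<bar>c\<bar>" using B by (smt (verit))
  thus ?thesis using m by (auto simp: bb_iff)
qed

lemma subharm_max:
  assumes q: "q \<ge> 0" and u: "bounded_borel u" and sub: "\<And>x. u x \<le> P q u x"
  shows "max (u x) c \<le> P q (\<lambda>y. max (u y) c) x"
proof -
  have "u x \<le> P q (\<lambda>y. max (u y) c) x"
    using sub[of x] P_mono[OF q u bb_max[OF u, of c], where x=x] by (smt (verit) max.cobounded1)
  moreover have "c \<le> P q (\<lambda>y. max (u y) c) x"
    using P_mono[OF q bb_const[of c] bb_max[OF u, of c], where x=x] P_const[of q c x] by simp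
  ultimately show ?thesis by simp
qed

lemma level_inv:
  assumes q: "q \<ge> 0" and u: "bounded_borel u" and sub: "\<And>x. u x \<le> P q u x"
  shows "AE x in \<mu>. P q (indicator {y. c < u y}) x = indicator {y. c < u y} x"
proof -
  define e where "e k = 1 / (real k + 1)" for k :: nat
  have e_pos: "e k > 0" for k unfolding e_def by simp
  define g where "g k y = 1 + (real k + 1) * (max (u y) c - max (u y) (c + e k))" for k y
  have gb: "0 \<le> g k y \<and> g k y \<le> 1" for k y
  proof -
    define d where "d = max (u y) c - max (u y) (c + e k)"
    have ke: "(real k + 1) * e k = 1" unfolding e_def by simp
    have d1: "d \<le> 0" "- e k \<le> d" unfolding d_def using e_pos[of k] by auto
    have "(real k + 1) * d \<le> 0" using d1 by (simp add: mult_nonneg_nonpos)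
    moreover have "(real k + 1) * (- e k) \<le> (real k + 1) * d" using d1 by (intro mult_left_mono) auto
    ultimately show ?thesis unfolding g_def d_def[symmetric] using ke by simp
  qed
  have m1: "bounded_borel (\<lambda>y. max (u y) c)" "bounded_borel (\<lambda>y. max (u y) (c + e k))" for k
    by (rule bb_max[OF u])+
  have Pg: "P q (g k) x = 1 + (real k + 1) * (P q (\<lambda>y. max (u y) c) x - P q (\<lambda>y. max (u y) (c + e k)) x)" for k x
  proof -
    interpret prob_space "M x" by (rule prob)
    show ?thesis unfolding P_def g_def
      using int_comp[OF q m1(1), where x=x] int_comp[OF q m1(2)[of k], where x=x] by (simp add: algebra_simps prob_space)
  qed
  have gm: "g k \<in> borel_measurable borel" for k
    using m1(1) m1(2)[of k] unfolding g_def bb_iff by auto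
  have ae1: "AE x in \<mu>. P q (\<lambda>y. max (u y) c) x = max (u x) c"
    by (rule harm_ae[OF q m1(1)]) (rule subharm_max[OF q u sub])
  have ae2: "AE x in \<mu>. \<forall>k. P q (\<lambda>y. max (u y) (c + e k)) x = max (u x) (c + e k)"
    unfolding AE_all_countable by (intro allI harm_ae[OF q m1(2)]) (rule subharm_max[OF q u sub])
  have glim: "(\<lambda>k. g k y) \<longlonglongrightarrow> indicator {y. c < u y} y" for y
  proof (cases "c < u y")
    case True
    then obtain n where n: "inverse (real (Suc n)) < u y - c" using reals_Archimedean[of "u y - c"] by force
    have "eventually (\<lambda>k. g k y = 1) sequentially"
    proof (rule eventually_sequentiallyI[of n])
      fix k assume "n \<le> k"
      hence "e k \<le> inverse (real (Suc n))" unfolding e_def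
        by (simp add: divide_simps inverse_eq_divide)
      hence "c + e k < u y" using n by simp
      thus "g k y = 1" unfolding g_def using True by simp
    qed
    thus ?thesis using True by (simp add: tendsto_eventually)
  next
    case False
    have "g k y = 0" for k
    proof -
      have "max (u y) c = c" "max (u y) (c + e k) = c + e k" using False e_pos[of k] by auto
      moreover have "(real k + 1) * e k = 1" unfolding e_def by simp
      ultimately show ?thesis unfolding g_def by (simp add: algebra_simps)
    qed
    thus ?thesis using False by simp
  qed
  have Plim: "(\<lambda>k. P q (g k) x) \<longlonglongrightarrow> P q (indicator {y. c < u y}) x" for x
    unfolding P_def
  proof (rule dct_bounded[OF prob, where B=1])
    have um: "u \<in> borel_measurable borel" using u unfolding bb_iff by simp
    have "{y. c < u y} \<in> sets borel" using um by measurable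
    thus "(\<lambda>\<omega>. indicator {y. c < u y} (X q \<omega>) :: real) \<in> borel_measurable (M x)"
      by (intro meas_comp[OF q]) simp
    show "\<And>i. (\<lambda>\<omega>. g i (X q \<omega>)) \<in> borel_measurable (M x)" by (rule meas_comp[OF q gm])
    show "AE \<omega> in M x. (\<lambda>i. g i (X q \<omega>)) \<longlonglongrightarrow> indicator {y. c < u y} (X q \<omega>)" by (simp add: glim)
    show "\<And>i \<omega>. \<bar>g i (X q \<omega>)\<bar> \<le> 1" using gb by (simp add: abs_le_iff)
  qed
  show ?thesis
  proof (rule AE_mp[OF AE_conjI[OF ae1 ae2]], intro AE_I2 impI)
    fix x assume a: "P q (\<lambda>y. max (u y) c) x = max (u x) c \<and>
      (\<forall>k. P q (\<lambda>y. max (u y) (c + e k)) x = max (u x) (c + e k))"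
    hence "P q (g k) x = g k x" for k unfolding Pg g_def by simp
    hence "(\<lambda>k. P q (g k) x) \<longlonglongrightarrow> indicator {y. c < u y} x" using glim[of x] by simp
    thus "P q (indicator {y. c < u y}) x = indicator {y. c < u y} x"
      using Plim[of x] LIMSEQ_unique by blast
  qed
qed


lemma P_nonneg: "(\<And>y. 0 \<le> g y) \<Longrightarrow> 0 \<le> P t g x"
  unfolding P_def by (rule Bochner_Integration.integral_nonneg) auto

lemma P_ind_compl: "t \<ge> 0 \<Longrightarrow> A \<in> sets borel \<Longrightarrow> P t (indicator (- A)) x = 1 - P t (indicator A) x"
proof -
  assume t: "t \<ge> 0" and A: "A \<in> sets borel"
  interpret prob_space "M x" by (rule prob)
  show ?thesis unfolding P_def indicator_compl
    using int_comp[OF t bb_ind[OF A], where x=x] by (simp add: prob_space)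
qed

lemma ind_le1: "indicator A x \<le> (1::real)" by (simp add: indicator_def)

lemma leak_ineq:
  assumes t: "t \<ge> 0" and d: "\<delta> \<ge> 0" and A: "A \<in> sets borel"
  shows "(\<integral>x. indicator (- A) x * P t (indicator A) x \<partial>\<mu>) \<le>
    (\<integral>x. indicator (- A) x * P (t + \<delta>) (indicator A) x \<partial>\<mu>) + (\<integral>x. indicator A x * P \<delta> (indicator (- A)) x \<partial>\<mu>)"
proof -
  have cA: "- A \<in> sets borel" using A by simp
  define G where "G y = indicator A y * P \<delta> (indicator (- A)) y" for y
  have Gbb: "bounded_borel G" unfolding G_def by (intro bb_mult bb_ind[OF A] bb_P[OF d bb_ind[OF cA]])
  have PAbb: "bounded_borel (P \<delta> (indicator A))" by (rule bb_P[OF d bb_ind[OF A]])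
  define H where "H y = 1 * P \<delta> (indicator A) y + 1 * G y" for y
  have Hbb: "bounded_borel H" unfolding H_def by (intro bb_lin PAbb Gbb)
  have pt1: "indicator A y \<le> H y" for y
  proof (cases "y \<in> A")
    case True thus ?thesis unfolding H_def G_def using P_ind_compl[OF d A, of y] by simp
  next
    case False thus ?thesis unfolding H_def G_def by (simp add: P_nonneg)
  qed
  have PH: "P t H x = P (t + \<delta>) (indicator A) x + P t G x" for x
    unfolding H_def using P_lin[OF t PAbb Gbb, of 1 1 x] markov[OF t d bb_ind[OF A], of x] by simp
  have pt2: "P t (indicator A) x \<le> P t H x" for x by (rule P_mono[OF t bb_ind[OF A] Hbb pt1])
  have Gnn: "0 \<le> P t G x" for x unfolding G_def by (rule P_nonneg) (auto intro!: mult_nonneg_nonneg P_nonneg)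
  have pt3: "indicator (- A) x * P t (indicator A) x \<le> indicator (- A) x * P (t + \<delta>) (indicator A) x + P t G x" for x
  proof (cases "x \<in> A")
    case True thus ?thesis using Gnn[of x] by simp
  next
    case False thus ?thesis using pt2[of x] PH[of x] by simp
  qed
  have i1: "integrable \<mu> (\<lambda>x. indicator (- A) x * P t (indicator A) x)"
    by (intro int_bb bb_mult bb_ind[OF cA] bb_P[OF t bb_ind[OF A]])
  have i2: "integrable \<mu> (\<lambda>x. indicator (- A) x * P (t + \<delta>) (indicator A) x)"
    using t d by (intro int_bb bb_mult bb_ind[OF cA] bb_P bb_ind[OF A]) auto
  have i3: "integrable \<mu> (P t G)" by (intro int_bb bb_P[OF t Gbb])
  have "(\<integral>x. indicator (- A) x * P t (indicator A) x \<partial>\<mu>) \<le>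
     (\<integral>x. indicator (- A) x * P (t + \<delta>) (indicator A) x + P t G x \<partial>\<mu>)"
    by (rule integral_mono[OF i1 Bochner_Integration.integrable_add[OF i2 i3] pt3])
  also have "\<dots> = (\<integral>x. indicator (- A) x * P (t + \<delta>) (indicator A) x \<partial>\<mu>) + (\<integral>x. P t G x \<partial>\<mu>)"
    by (rule Bochner_Integration.integral_add[OF i2 i3])
  also have "(\<integral>x. P t G x \<partial>\<mu>) = (\<integral>x. G x \<partial>\<mu>)" by (rule P_inv[OF t Gbb])
  finally show ?thesis unfolding G_def .
qed

definition L :: "'a set \<Rightarrow> real \<Rightarrow> real" where
  "L B d = (\<integral>x. indicator (- B) x * P d (indicator B) x \<partial>\<mu>)"

lemma L_nonneg: "0 \<le> L B d"
  unfolding L_def by (rule Bochner_Integration.integral_nonneg) (auto intro!: mult_nonneg_nonneg P_nonneg)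

lemma filterlim_delta:
  assumes dpos: "\<And>n. \<delta> n > 0" and dlim: "\<delta> \<longlonglongrightarrow> 0"
  shows "filterlim \<delta> (at_right 0) sequentially"
  unfolding filterlim_at using dpos dlim by (auto intro!: always_eventually) (metis dpos less_irrefl)

lemma P_small:
  assumes F: "closed F" and x: "x \<notin> F" and dpos: "\<And>n. \<delta> n > 0" and dlim: "\<delta> \<longlonglongrightarrow> 0"
  shows "(\<lambda>n. P (\<delta> n) (indicator F) x) \<longlonglongrightarrow> 0"
proof -
  have Fb: "F \<in> sets borel" using F by simp
  have "(\<lambda>n. P (\<delta> n) (indicator F) x) \<longlonglongrightarrow> (\<integral>\<omega>. 0 \<partial>M x)"
    unfolding P_def
  proof (rule dct_bounded[OF prob, where B=1])
    show "(\<lambda>\<omega>. 0::real) \<in> borel_measurable (M x)" by simp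
    show "\<And>i. (\<lambda>\<omega>. indicator F (X (\<delta> i) \<omega>) :: real) \<in> borel_measurable (M x)"
      using dpos Fb by (intro meas_comp) (auto intro: less_imp_le)
    show "\<And>i \<omega>. \<bar>indicator F (X (\<delta> i) \<omega>) :: real\<bar> \<le> 1" by (simp add: indicator_def)
    show "AE \<omega> in M x. (\<lambda>i. indicator F (X (\<delta> i) \<omega>) :: real) \<longlonglongrightarrow> 0"
      using X0[of x]
    proof (rule AE_mp[OF _ AE_I2[OF impI]])
      fix \<omega> assume \<omega>: "\<omega> \<in> space (M x)" and x0: "X 0 \<omega> = x"
      have "((\<lambda>n. X (\<delta> n) \<omega>) \<longlongrightarrow> X 0 \<omega>) sequentially"
        by (rule filterlim_compose[OF rc[OF \<omega>] filterlim_delta[OF dpos dlim]])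
      hence "eventually (\<lambda>n. X (\<delta> n) \<omega> \<in> - F) sequentially"
        using F x x0 by (intro topological_tendstoD) auto
      hence "eventually (\<lambda>n. (indicator F (X (\<delta> n) \<omega>) :: real) = 0) sequentially"
        by (rule eventually_mono) auto
      thus "(\<lambda>i. indicator F (X (\<delta> i) \<omega>) :: real) \<longlonglongrightarrow> 0" by (rule tendsto_eventually)
    qed
  qed
  thus ?thesis by simp
qed

lemma leak_cont:
  assumes B: "B \<in> sets borel" and dpos: "\<And>n. \<delta> n > 0" and dlim: "\<delta> \<longlonglongrightarrow> 0" and e: "e > 0"
  shows "eventually (\<lambda>n. L B (\<delta> n) \<le> e) sequentially"
proof -
  interpret prob_space \<mu> by (rule mu_prob)
  have Bm: "B \<in> sets \<mu>" using B sets_mu by simp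
  obtain F where FB: "F \<subseteq> B" and Fc: "compact F" and Fm: "measure \<mu> B - e/2 < measure \<mu> F"
  proof (cases "measure \<mu> B < e/2")
    case True thus ?thesis using that[of "{}"] e by auto
  next
    case False
    have "ennreal (measure \<mu> B - e/2) < ennreal (measure \<mu> B)"
      using False e by (subst ennreal_less_iff) auto
    also have "\<dots> = emeasure \<mu> B" by (simp add: emeasure_eq_measure)
    also have "\<dots> = (SUP K \<in> {K. K \<subseteq> B \<and> compact K}. emeasure \<mu> K)"
      by (rule inner_regular[OF sets_mu _ B]) simp
    finally obtain K where K: "K \<subseteq> B" "compact K" "ennreal (measure \<mu> B - e/2) < emeasure \<mu> K"
      unfolding less_SUP_iff by auto
    hence "measure \<mu> B - e/2 < measure \<mu> K"
      using False by (simp add: emeasure_eq_measure ennreal_less_iff)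
    thus ?thesis using that K by blast
  qed
  have Fcl: "closed F" using Fc by (rule compact_imp_closed)
  have Fb: "F \<in> sets borel" using Fcl by simp
  have Fm': "F \<in> sets \<mu>" using Fb sets_mu by simp
  have cF: "- F \<in> sets borel" "- B \<in> sets borel" "B - F \<in> sets borel" using Fb B by auto
  have BF: "measure \<mu> (B - F) < e/2" using finite_measure_Diff[OF Bm Fm' FB] Fm by simp
  have split: "P d (indicator B) x = P d (indicator F) x + P d (indicator (B - F)) x" if d: "d \<ge> 0" for d x
  proof -
    have "indicator B = (\<lambda>y. 1 * indicator F y + 1 * indicator (B - F) y :: real)"
      using FB by (auto simp: indicator_def fun_eq_iff)
    thus ?thesis using P_lin[OF d bb_ind[OF Fb] bb_ind[OF cF(3)], of 1 1 x] by simp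
  qed
  have Lle: "L B d \<le> L F d + e/2" if d: "d \<ge> 0" for d
  proof -
    have pt: "indicator (- B) x * P d (indicator B) x \<le> indicator (- F) x * P d (indicator F) x + P d (indicator (B - F)) x" for x
    proof (cases "x \<in> B")
      case True thus ?thesis
        using P_nonneg[of "indicator F" d x] P_nonneg[of "indicator (B - F)" d x]
        by (simp add: indicator_def)
    next
      case False
      hence "x \<notin> F" using FB by auto
      thus ?thesis using False split[OF d, of x] by simp
    qed
    have i1: "integrable \<mu> (\<lambda>x. indicator (- B) x * P d (indicator B) x)"
      by (intro int_bb bb_mult bb_ind[OF cF(2)] bb_P[OF d bb_ind[OF B]])
    have i2: "integrable \<mu> (\<lambda>x. indicator (- F) x * P d (indicator F) x)"
      by (intro int_bb bb_mult bb_ind[OF cF(1)] bb_P[OF d bb_ind[OF Fb]])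
    have i3: "integrable \<mu> (P d (indicator (B - F)))" by (intro int_bb bb_P[OF d bb_ind[OF cF(3)]])
    have "L B d \<le> (\<integral>x. indicator (- F) x * P d (indicator F) x + P d (indicator (B - F)) x \<partial>\<mu>)"
      unfolding L_def by (rule integral_mono[OF i1 Bochner_Integration.integrable_add[OF i2 i3] pt])
    also have "\<dots> = L F d + (\<integral>x. P d (indicator (B - F)) x \<partial>\<mu>)"
      unfolding L_def by (rule Bochner_Integration.integral_add[OF i2 i3])
    also have "(\<integral>x. P d (indicator (B - F)) x \<partial>\<mu>) = measure \<mu> (B - F)"
      using P_inv[OF d bb_ind[OF cF(3)]] by (simp add: space_mu)
    finally show ?thesis using BF by simp
  qed
  have LF: "(\<lambda>n. L F (\<delta> n)) \<longlonglongrightarrow> (\<integral>x. 0 \<partial>\<mu>)"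
    unfolding L_def
  proof (rule dct_bounded[OF mu_prob, where B=1])
    show "(\<lambda>x. 0::real) \<in> borel_measurable \<mu>" by simp
    show "\<And>i. (\<lambda>x. indicator (- F) x * P (\<delta> i) (indicator F) x) \<in> borel_measurable \<mu>"
      using dpos by (intro meas_mu bb_mult[THEN bb_iff[THEN iffD1], THEN conjunct1] bb_ind[OF cF(1)]
          bb_P bb_ind[OF Fb]) (auto intro: less_imp_le)
    show "\<And>i x. \<bar>indicator (- F) x * P (\<delta> i) (indicator F) x\<bar> \<le> 1"
    proof -
      fix i x
      have "\<bar>P (\<delta> i) (indicator F) x\<bar> \<le> 1" by (rule P_bound) (simp add: indicator_def)
      thus "\<bar>indicator (- F) x * P (\<delta> i) (indicator F) x\<bar> \<le> 1" by (simp add: indicator_def)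
    qed
    show "AE x in \<mu>. (\<lambda>i. indicator (- F) x * P (\<delta> i) (indicator F) x) \<longlonglongrightarrow> 0"
    proof (rule AE_I2)
      fix x show "(\<lambda>i. indicator (- F) x * P (\<delta> i) (indicator F) x) \<longlonglongrightarrow> 0"
      proof (cases "x \<in> F")
        case True thus ?thesis by simp
      next
        case False thus ?thesis using P_small[OF Fcl False dpos dlim] by simp
      qed
    qed
  qed
  hence "eventually (\<lambda>n. L F (\<delta> n) < e/2) sequentially"
    using e by (intro order_tendstoD(2)) auto
  thus ?thesis
  proof (rule eventually_mono)
    fix n assume "L F (\<delta> n) < e/2"
    thus "L B (\<delta> n) \<le> e" using Lle[of "\<delta> n"] dpos[of n] by simp
  qed
qed


lemma real_leak:
  assumes A: "A \<in> sets borel"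
    and rat: "\<And>q. q \<in> \<rat> \<Longrightarrow> q \<ge> 0 \<Longrightarrow> AE x in \<mu>. P q (indicator A) x = indicator A x"
    and t: "t \<ge> 0"
  shows "AE x in \<mu>. indicator (- A) x * P t (indicator A) x = 0"
proof -
  have cA: "- A \<in> sets borel" using A by simp
  define \<delta> where "\<delta> n = real_of_int (\<lfloor>(real n + 1) * t\<rfloor> + 1) / (real n + 1) - t" for n :: nat
  have dpos: "\<delta> n > 0" for n
  proof -
    have "(real n + 1) * t < real_of_int (\<lfloor>(real n + 1) * t\<rfloor> + 1)" by linarith
    hence "t < real_of_int (\<lfloor>(real n + 1) * t\<rfloor> + 1) / (real n + 1)"
      by (simp add: less_divide_eq mult.commute)
    thus ?thesis unfolding \<delta>_def by simp
  qed
  have dle: "\<delta> n \<le> inverse (real (Suc n))" for n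
  proof -
    have e1: "(t + inverse (real n + 1)) * (real n + 1) = (real n + 1) * t + 1"
    proof -
      have "inverse (real n + 1) * (real n + 1) = 1" by simp
      thus ?thesis by (simp only: distrib_right) (simp add: algebra_simps)
    qed
    have "real_of_int (\<lfloor>(real n + 1) * t\<rfloor> + 1) \<le> (t + inverse (real n + 1)) * (real n + 1)"
      unfolding e1 by simp
    hence "real_of_int (\<lfloor>(real n + 1) * t\<rfloor> + 1) / (real n + 1) \<le> t + inverse (real n + 1)"
      by (simp add: divide_le_eq del: of_int_add)
    thus ?thesis unfolding \<delta>_def by (simp add: add.commute)
  qed
  have dlim: "\<delta> \<longlonglongrightarrow> 0"
  proof -
    have ev1: "eventually (\<lambda>n. 0 \<le> \<delta> n) sequentially"
      using dpos by (intro always_eventually allI less_imp_le) 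
    have ev2: "eventually (\<lambda>n. \<delta> n \<le> inverse (real (Suc n))) sequentially"
      using dle by (intro always_eventually allI)
    show ?thesis by (rule tendsto_sandwich[OF ev1 ev2 tendsto_const LIMSEQ_inverse_real_of_nat])
  qed
  have drat: "t + \<delta> n \<in> \<rat>" for n
  proof -
    have "t + \<delta> n = real_of_int (\<lfloor>(real n + 1) * t\<rfloor> + 1) / (real n + 1)" unfolding \<delta>_def by simp
    also have "\<dots> \<in> \<rat>" by (intro Rats_divide Rats_add Rats_of_int Rats_of_nat Rats_1)
    finally show ?thesis .
  qed
  define a where "a = (\<integral>x. indicator (- A) x * P t (indicator A) x \<partial>\<mu>)"
  have aL: "a \<le> L (- A) (\<delta> n)" for n
  proof -
    have dn: "\<delta> n \<ge> 0" using dpos[of n] by simp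
    have "(\<integral>x. indicator (- A) x * P (t + \<delta> n) (indicator A) x \<partial>\<mu>) = (\<integral>x. 0 \<partial>\<mu>)"
    proof (rule integral_cong_AE)
      show "(\<lambda>x. indicator (- A) x * P (t + \<delta> n) (indicator A) x) \<in> borel_measurable \<mu>"
        using t dn by (intro meas_mu bb_mult[THEN bb_iff[THEN iffD1], THEN conjunct1] bb_ind[OF cA]
          bb_P bb_ind[OF A]) auto
      show "(\<lambda>x. 0::real) \<in> borel_measurable \<mu>" by simp
      show "AE x in \<mu>. indicator (- A) x * P (t + \<delta> n) (indicator A) x = 0"
        using rat[OF drat[of n]] t dn by (auto simp: indicator_def)
    qed
    hence "a \<le> 0 + (\<integral>x. indicator A x * P (\<delta> n) (indicator (- A)) x \<partial>\<mu>)"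
      using leak_ineq[OF t dn A] unfolding a_def by simp
    thus ?thesis unfolding L_def by simp
  qed
  have "a \<le> 0"
  proof (rule field_le_epsilon)
    fix e :: real assume e: "0 < e"
    from leak_cont[OF cA dpos dlim e] obtain N where "\<And>n. n \<ge> N \<Longrightarrow> L (- A) (\<delta> n) \<le> e"
      unfolding eventually_sequentially by auto
    thus "a \<le> 0 + e" using aL[of N] by force
  qed
  moreover have "0 \<le> a" unfolding a_def
    by (rule Bochner_Integration.integral_nonneg) (auto intro!: mult_nonneg_nonneg P_nonneg)
  ultimately have a0: "a = 0" by simp
  have "integrable \<mu> (\<lambda>x. indicator (- A) x * P t (indicator A) x)"
    by (intro int_bb bb_mult bb_ind[OF cA] bb_P[OF t bb_ind[OF A]])
  moreover have "AE x in \<mu>. 0 \<le> indicator (- A) x * P t (indicator A) x"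
    by (auto intro!: mult_nonneg_nonneg P_nonneg)
  ultimately show ?thesis using integral_nonneg_eq_0_iff_AE a0 unfolding a_def by blast
qed

lemma full_inv:
  assumes A: "A \<in> sets borel"
    and rat: "\<And>q. q \<in> \<rat> \<Longrightarrow> q \<ge> 0 \<Longrightarrow> AE x in \<mu>. P q (indicator A) x = indicator A x"
    and t: "t \<ge> 0"
  shows "AE x in \<mu>. P t (indicator A) x = indicator A x"
proof -
  have cA: "- A \<in> sets borel" using A by simp
  have rat': "AE x in \<mu>. P q (indicator (- A)) x = indicator (- A) x" if "q \<in> \<rat>" "q \<ge> 0" for q
    using rat[OF that] P_ind_compl[OF that(2) A] by (auto simp: indicator_compl)
  have l1: "AE x in \<mu>. indicator (- A) x * P t (indicator A) x = 0" by (rule real_leak[OF A rat t])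
  have l2: "AE x in \<mu>. indicator (- (- A)) x * P t (indicator (- A)) x = 0" by (rule real_leak[OF cA rat' t])
  show ?thesis
  proof (rule AE_mp[OF AE_conjI[OF l1 l2]], intro AE_I2 impI)
    fix x assume h: "indicator (- A) x * P t (indicator A) x = 0 \<and> indicator (- (- A)) x * P t (indicator (- A)) x = 0"
    show "P t (indicator A) x = indicator A x"
    proof (cases "x \<in> A")
      case True thus ?thesis using h P_ind_compl[OF t A, of x] by simp
    next
      case False thus ?thesis using h by simp
    qed
  qed
qed

lemma V_level_invariant:
  assumes hm: "h \<in> borel_measurable borel" and hB: "\<And>x. \<bar>h x\<bar> \<le> B"
  shows "invariant_set M X \<mu> {y. c < V h y}"
  unfolding invariant_set_def
proof (intro conjI allI impI)
  have Vm: "V h \<in> borel_measurable borel" by (rule V_meas[OF hm hB])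
  show A: "{y. c < V h y} \<in> sets borel" using Vm by measurable
  fix t :: real assume t: "t \<ge> 0"
  have "AE x in \<mu>. P t (indicator {y. c < V h y}) x = indicator {y. c < V h y} x"
  proof (rule full_inv[OF A _ t])
    fix q :: real assume "q \<in> \<rat>" "q \<ge> 0"
    thus "AE x in \<mu>. P q (indicator {y. c < V h y}) x = indicator {y. c < V h y} x"
      by (intro level_inv V_bb[OF hm hB] V_subharm[OF hm hB])
  qed
  thus "AE x in \<mu>. trans_kernel M X t x {y. c < V h y} = indicator {y. c < V h y} x"
    using tk_P[OF t A] by simp
qed

end


theorem mainTheorem12:
  fixes M :: "'a::polish_space \<Rightarrow> 'w measure" and X :: "real \<Rightarrow> 'w \<Rightarrow> 'a"
    and \<mu> :: "'a measure" and f :: "'a \<Rightarrow> real" and Xb :: "'a set"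
  assumes "cadlag_feller_markov M X"
    and "ergodic_measure M X \<mu>"
    and "f \<in> borel_measurable borel"
    and "Xb \<in> sets borel" and "measure \<mu> Xb > 0"
    and "\<forall>x\<in>Xb. (SUP t\<in>{0..}. \<integral>\<^sup>+\<omega>. ennreal \<bar>f (X t \<omega>)\<bar> \<partial>M x) < \<infinity>"
  shows "integrable \<mu> f"
proof -
  have inv: "invariant_measure M X \<mu>" and erg: "\<And>A. invariant_set M X \<mu> A \<Longrightarrow> measure \<mu> A = 0 \<or> measure \<mu> A = 1"
    using assms(2) unfolding ergodic_measure_def by auto
  interpret cfm M X \<mu> using assms(1) inv by unfold_locales
  interpret prob_space \<mu> by (rule mu_prob)
  have fm: "f \<in> borel_measurable borel" by (rule assms(3))
  define hN where "hN N y = min \<bar>f y\<bar> (real N)" for N :: nat and y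
  have hm: "hN N \<in> borel_measurable borel" for N using fm unfolding hN_def by measurable
  have hB: "\<bar>hN N y\<bar> \<le> real N" for N y unfolding hN_def by auto
  have hnn: "0 \<le> hN N y" for N y unfolding hN_def by auto
  have key: "AE x in \<mu>. (\<integral>y. hN N y \<partial>\<mu>) - 1 < V (hN N) x" for N
  proof -
    define c where "c = (\<integral>y. hN N y \<partial>\<mu>) - 1"
    have Vm: "V (hN N) \<in> borel_measurable borel" by (rule V_meas[OF hm hB])
    have Ab: "{y. c < V (hN N) y} \<in> sets borel" using Vm by measurable
    have Am: "{y. c < V (hN N) y} \<in> sets \<mu>" using Ab sets_mu by simp
    have "measure \<mu> {y. c < V (hN N) y} \<noteq> 0"
    proof
      assume m0: "measure \<mu> {y. c < V (hN N) y} = 0"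
      have "AE x in \<mu>. \<not> (c < V (hN N) x)"
        using AE_iff_measurable[OF Am, of "\<lambda>x. \<not> (c < V (hN N) x)"] m0
        by (simp add: emeasure_eq_measure space_mu)
      hence "(\<integral>x. V (hN N) x \<partial>\<mu>) \<le> (\<integral>x. c \<partial>\<mu>)"
        by (intro integral_mono_AE int_bb V_bb[OF hm hB] bb_const) auto
      hence "(\<integral>x. V (hN N) x \<partial>\<mu>) \<le> c" by (simp add: prob_space)
      thus False using int_V[OF hm hB, of N] unfolding c_def by simp
    qed
    hence "measure \<mu> {y. c < V (hN N) y} = 1" using erg[OF V_level_invariant[OF hm hB]] by auto
    hence "AE x in \<mu>. x \<in> {y. c < V (hN N) y}" by (rule AE_prob_1)
    thus ?thesis unfolding c_def by simp
  qed
  have "AE x in \<mu>. \<forall>N. (\<integral>y. hN N y \<partial>\<mu>) - 1 < V (hN N) x"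
    unfolding AE_all_countable using key by blast
  note ae = this
  have "\<exists>x\<in>Xb. \<forall>N. (\<integral>y. hN N y \<partial>\<mu>) - 1 < V (hN N) x"
  proof (rule ccontr)
    assume nex: "\<not> (\<exists>x\<in>Xb. \<forall>N. (\<integral>y. hN N y \<partial>\<mu>) - 1 < V (hN N) x)"
    have "AE x in \<mu>. x \<notin> Xb"
      by (rule AE_mp[OF ae], rule AE_I2) (use nex in blast)
    moreover have Xbm: "Xb \<in> sets \<mu>" using assms(4) sets_mu by simp
    ultimately have "emeasure \<mu> Xb = 0"
      using AE_iff_measurable[OF Xbm, of "\<lambda>x. x \<notin> Xb"] by (simp add: space_mu)
    thus False using assms(5) by (simp add: emeasure_eq_measure)
  qed
  then obtain x where x: "x \<in> Xb" and xk: "\<And>N. (\<integral>y. hN N y \<partial>\<mu>) - 1 < V (hN N) x"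
    by blast
  have hbbN: "bounded_borel (hN N)" for N unfolding bb_iff using hm hB by blast
  define Kx where "Kx = (SUP t\<in>{0..}. \<integral>\<^sup>+\<omega>. ennreal \<bar>f (X t \<omega>)\<bar> \<partial>M x)"
  have Kfin: "Kx < \<infinity>" using assms(6) x unfolding Kx_def by blast
  define C where "C = enn2real Kx + 1"
  have PleK: "P r (hN N) x \<le> enn2real Kx" if r: "r \<ge> 0" for r N
  proof -
    have "ennreal (P r (hN N) x) = (\<integral>\<^sup>+\<omega>. ennreal (hN N (X r \<omega>)) \<partial>M x)"
      unfolding P_def
      by (rule nn_integral_eq_integral[symmetric]) (simp_all add: int_comp[OF r hbbN] hnn)
    also have "\<dots> \<le> (\<integral>\<^sup>+\<omega>. ennreal \<bar>f (X r \<omega>)\<bar> \<partial>M x)"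
      by (intro nn_integral_mono) (simp add: hN_def)
    also have "\<dots> \<le> Kx" unfolding Kx_def using r by (intro SUP_upper) auto
    also have "\<dots> = ennreal (enn2real Kx)" using Kfin by (simp add: ennreal_enn2real_if)
    finally show ?thesis by (subst (asm) ennreal_le_iff) auto
  qed
  have hC: "(\<integral>y. hN N y \<partial>\<mu>) \<le> C" for N
  proof -
    have "V (hN N) x \<le> S (hN N) 0 x" by (rule V_le_S[OF hm hB])
    also have "S (hN N) 0 x \<le> enn2real Kx" unfolding S_def
      by (rule cSUP_least[OF Rn_ne]) (auto intro: PleK Rn_nonneg)
    finally show ?thesis using xk[of N] unfolding C_def by simp
  qed
  have "(\<integral>\<^sup>+y. ennreal (norm (f y)) \<partial>\<mu>) = (\<integral>\<^sup>+y. (SUP N. ennreal (hN N y)) \<partial>\<mu>)"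
  proof (intro nn_integral_cong)
    fix y
    show "ennreal (norm (f y)) = (SUP N. ennreal (hN N y))"
    proof (rule antisym)
      obtain N where N: "\<bar>f y\<bar> \<le> real N" using real_arch_simple by blast
      hence "ennreal (norm (f y)) = ennreal (hN N y)" unfolding hN_def by simp
      thus "ennreal (norm (f y)) \<le> (SUP N. ennreal (hN N y))" by (metis (mono_tags) SUP_upper UNIV_I real_norm_def)
      show "(SUP N. ennreal (hN N y)) \<le> ennreal (norm (f y))"
        by (rule SUP_least) (simp add: hN_def)
    qed
  qed
  also have "\<dots> = (SUP N. \<integral>\<^sup>+y. ennreal (hN N y) \<partial>\<mu>)"
  proof (rule nn_integral_monotone_convergence_SUP)
    show "incseq (\<lambda>N y. ennreal (hN N y))"
    proof (rule incseq_SucI)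
      fix N
      have "hN N y \<le> hN (Suc N) y" for y unfolding hN_def by simp
      thus "(\<lambda>y. ennreal (hN N y)) \<le> (\<lambda>y. ennreal (hN (Suc N) y))"
        by (simp add: le_fun_def ennreal_leI)
    qed
    show "\<And>N. (\<lambda>y. ennreal (hN N y)) \<in> borel_measurable \<mu>"
      by (rule measurable_compose[OF meas_mu[OF hm] measurable_ennreal])
  qed
  also have "\<dots> \<le> ennreal C"
  proof (rule SUP_least)
    fix N
    have "(\<integral>\<^sup>+y. ennreal (hN N y) \<partial>\<mu>) = ennreal (\<integral>y. hN N y \<partial>\<mu>)"
      by (rule nn_integral_eq_integral) (simp_all add: int_bb[OF hbbN] hnn)
    also have "\<dots> \<le> ennreal C" using hC[of N] by (rule ennreal_leI)
    finally show "(\<integral>\<^sup>+y. ennreal (hN N y) \<partial>\<mu>) \<le> ennreal C" .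
  qed
  also have "\<dots> < \<infinity>" by simp
  finally show ?thesis by (rule integrableI_bounded[OF meas_mu[OF fm]])
qed

end
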